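(* Let $\{p,q\}\subset[1,\infty]$ with $q<p$, and let $(\mathcal B_n)_{n\in\mathbb N_0}$ be $\sigma$-subfields with $D(\mathcal B_n,\mathcal B_0)\to0$. Then $\|\mathbb P_{\mathcal B_n}-\mathbb P_{\mathcal B_0}\|_{L^p\to L^q}\to0$. Consequently, for $q<p$, operator-norm convergence $L^p\to L^q$ is equivalent to convergence in the Hausdorff distance $D$.
   Context: Let $(\Omega,\mathcal F,\mathbb P)$ be a (not necessarily complete) probability space and $\mathcal N:=\{F\in\mathcal F:\mathbb P(F)=0\}$. A $\sigma$-subfield is a sub-$\sigma$-field $\mathcal A\subset\mathcal F$ with $\mathcal A=\sigma(\mathcal A\cup\mathcal N)$. For a $\sigma$-subfield $\mathcal A$, $\mathbb P_{\mathcal A}f:=\mathbb E^{\mathbb P}[f\mid\mathcal A]$, viewed as a bounded linear operator from the real normed space $L^p(\mathbb P)$ to $L^q(\mathbb P)$; $\|\cdot\|_{L^p\to L^q}$ is the operator norm. For $\sigma$-subfields $\mathcal A,\mathcal B$, $\rho(\mathcal A,\mathcal B):=\sup_{A\in\mathcal A}\inf_{B\in\mathcal B}\mathbb P(A\triangle B)$ and $D(\mathcal A,\mathcal B):=\rho(\mathcal A,\mathcal B)+\rho(\mathcal B,\mathcal A)$. *)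

theory Defs
  imports "HOL-Probability.Probability"
begin

definition sigma_subfield :: "'a measure \<Rightarrow> 'a set set \<Rightarrow> bool" where
  "sigma_subfield M A \<longleftrightarrow> A \<subseteq> sets M \<and> A = sigma_sets (space M) (A \<union> null_sets M)"

definition cond_exp :: "'a measure \<Rightarrow> 'a set set \<Rightarrow> ('a \<Rightarrow> real) \<Rightarrow> ('a \<Rightarrow> real)" where
  "cond_exp M A f = real_cond_exp M (sigma (space M) A) f"

definition lp_norm :: "'a measure \<Rightarrow> ennreal \<Rightarrow> ('a \<Rightarrow> real) \<Rightarrow> ennreal" where
  "lp_norm M p f =
     (if p = \<infinity> then esssup M (\<lambda>x. ennreal \<bar>f x\<bar>)
      else (let I = (\<integral>\<^sup>+ x. ennreal (\<bar>f x\<bar> powr enn2real p) \<partial>M)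
            in if I = \<infinity> then \<infinity> else ennreal (enn2real I powr (1 / enn2real p))))"

definition cond_exp_diff_opnorm ::
  "'a measure \<Rightarrow> ennreal \<Rightarrow> ennreal \<Rightarrow> 'a set set \<Rightarrow> 'a set set \<Rightarrow> ennreal" where
  "cond_exp_diff_opnorm M p q A B =
     (SUP f \<in> {f \<in> borel_measurable M. lp_norm M p f \<le> 1}.
        lp_norm M q (\<lambda>x. cond_exp M A f x - cond_exp M B f x))"

definition rho :: "'a measure \<Rightarrow> 'a set set \<Rightarrow> 'a set set \<Rightarrow> ennreal" where
  "rho M A B = (SUP X \<in> A. INF Y \<in> B. emeasure M ((X - Y) \<union> (Y - X)))"

definition hausdorff_D :: "'a measure \<Rightarrow> 'a set set \<Rightarrow> 'a set set \<Rightarrow> ennreal" where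
  "hausdorff_D M A B = rho M A B + rho M B A"

end

theory Submission
  imports Defs
begin

context prob_space begin

lemma sf_sub: "sigma_subfield M A \<Longrightarrow> A \<subseteq> sets M"
  by (simp add: sigma_subfield_def)

lemma sf_sigma_algebra: assumes "sigma_subfield M A" shows "sigma_algebra (space M) A"
proof -
  have e: "A = sigma_sets (space M) (A \<union> null_sets M)" using assms by (simp add: sigma_subfield_def)
  have n: "null_sets M \<subseteq> Pow (space M)" using null_setsD2 sets.sets_into_space by blast
  have "A \<subseteq> Pow (space M)" using assms sets.sets_into_space by (auto simp: sigma_subfield_def)
  with n have "A \<union> null_sets M \<subseteq> Pow (space M)" by blast
  then have "sigma_algebra (space M) (sigma_sets (space M) (A \<union> null_sets M))" by (rule sigma_algebra_sigma_sets)
  then show ?thesis using e by simp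
qed

lemma sf_sets: assumes "sigma_subfield M A" shows "sets (sigma (space M) A) = A"
proof -
  interpret S: sigma_algebra "space M" A by (rule sf_sigma_algebra[OF assms])
  have "A \<subseteq> Pow (space M)" using S.space_closed .
  then have "sets (sigma (space M) A) = sigma_sets (space M) A" by (rule sets_measure_of)
  also have "\<dots> = A" by (rule S.sigma_sets_eq)
  finally show ?thesis .
qed

lemma sf_fms: assumes "sigma_subfield M A" shows "finite_measure_subalgebra M (sigma (space M) A)"
proof -
  have "subalgebra M (sigma (space M) A)" unfolding subalgebra_def
    using sf_sets[OF assms] sf_sub[OF assms] by (simp add: space_measure_of_conv)
  then show ?thesis unfolding finite_measure_subalgebra_def finite_measure_subalgebra_axioms_def
    using finite_measure_axioms by simp
qed

end

lemma staircase:
  fixes x :: real and N :: nat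
  assumes N: "N > 0" and x: "-1 \<le> x" "x \<le> 1"
  shows "\<bar>x - (-1 + (\<Sum>i\<in>{1..2*N}. of_bool (-1 + real i / real N \<le> x)) / real N)\<bar> \<le> 1 / real N"
proof -
  define m where "m = nat \<lfloor>real N * (x+1)\<rfloor>"
  have Np: "real N > 0" using N by simp
  have t0: "0 \<le> real N * (x+1)" using x Np by simp
  have t1: "real N * (x+1) \<le> 2 * real N" using x Np by (simp add: mult_left_le)
  have m1: "real m \<le> real N * (x+1)" unfolding m_def using t0 by linarith
  have m2: "real N * (x+1) < real m + 1" unfolding m_def using t0 by linarith
  have m3: "m \<le> 2 * N" using m1 t1 by (metis of_nat_le_iff of_nat_mult order_trans of_nat_numeral)
  have iff: "(-1 + real i / real N \<le> x) \<longleftrightarrow> i \<le> m" for i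
  proof -
    have "(-1 + real i / real N \<le> x) \<longleftrightarrow> real i \<le> real N * (x+1)"
      using Np by (simp add: field_simps)
    also have "\<dots> \<longleftrightarrow> i \<le> m" using m1 m2 by (metis floor_of_nat le_floor_iff m_def nat_le_iff of_int_of_nat_eq t0 floor_mono nat_mono zero_le_floor nat_int le_nat_iff of_nat_le_iff order_trans less_le_not_le linorder_not_le )
    finally show ?thesis .
  qed
  have "(\<Sum>i\<in>{1..2*N}. of_bool (-1 + real i / real N \<le> x) :: real) = (\<Sum>i\<in>{1..2*N}. of_bool (i \<le> m))"
    using iff by simp
  also have "\<dots> = real (card ({1..2*N} \<inter> {i. i \<le> m}))"
    by (subst sum_of_bool_eq) auto
  also have "{1..2*N} \<inter> {i. i \<le> m} = {1..m}" using m3 by auto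
  finally have s: "(\<Sum>i\<in>{1..2*N}. of_bool (-1 + real i / real N \<le> x) :: real) = real m" by simp
  have "x - (-1 + real m / real N) = (real N * (x+1) - real m) / real N"
    using Np by (simp add: field_simps)
  moreover have "0 \<le> (real N * (x+1) - real m) / real N" using m1 Np by simp
  moreover have "(real N * (x+1) - real m) / real N \<le> 1 / real N" using m2 Np
    by (simp add: divide_right_mono)
  ultimately show ?thesis using s by simp
qed


context prob_space begin

lemma sf_meas: assumes "sigma_subfield M A" "f \<in> borel_measurable (sigma (space M) A)"
  shows "f \<in> borel_measurable M"
proof -
  interpret S: finite_measure_subalgebra M "sigma (space M) A" by (rule sf_fms[OF assms(1)])
  show ?thesis using assms(2) S.subalg by (rule measurable_from_subalg[rotated])
qed

lemma sf_set: fixes f :: "'a \<Rightarrow> real"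
  assumes "sigma_subfield M A" "f \<in> borel_measurable (sigma (space M) A)"
  shows "{x\<in>space M. c \<le> f x} \<in> A"
proof -
  have "{x\<in>space (sigma (space M) A). c \<le> f x} \<in> sets (sigma (space M) A)" using assms(2)[unfolded borel_measurable_iff_ge] by blast
  then show ?thesis using sf_sets[OF assms(1)] by (simp add: space_measure_of_conv)
qed

lemma sf_ind_meas: assumes "sigma_subfield M B" "Y \<in> B"
  shows "indicator Y \<in> borel_measurable (sigma (space M) B)"
proof -
  have "Y \<in> sets (sigma (space M) B)" using sf_sets[OF assms(1)] assms(2) by simp
  then show ?thesis by simp
qed

lemma approx_meas:
  assumes A: "sigma_subfield M A" and B: "sigma_subfield M B" and d: "\<delta> > 0"
    and H: "\<forall>X\<in>A. \<exists>Y\<in>B. emeasure M ((X - Y) \<union> (Y - X)) < ennreal \<delta>"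
    and g: "g \<in> borel_measurable (sigma (space M) A)" and gb: "\<forall>x\<in>space M. \<bar>g x\<bar> \<le> 1"
  shows "\<exists>h \<in> borel_measurable (sigma (space M) B). (\<forall>x. \<bar>h x\<bar> \<le> 1) \<and> (\<integral>x. \<bar>g x - h x\<bar> \<partial>M) \<le> 3*\<delta>"
proof -
  obtain N :: nat where Nl: "1/\<delta> < real N" using reals_Archimedean2 by blast
  have N0: "N > 0" using Nl d by (metis divide_pos_pos less_trans of_nat_0_less_iff zero_less_one)
  have Np: "real N > 0" using N0 by simp
  have Nd: "1 / real N \<le> \<delta>" using Nl d Np by (simp add: field_simps)
  define L where "L i = {x\<in>space M. -1 + real i / real N \<le> g x}" for i :: nat
  have LA: "L i \<in> A" for i unfolding L_def by (rule sf_set[OF A g])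
  have "\<forall>i. \<exists>Y. Y \<in> B \<and> emeasure M ((L i - Y) \<union> (Y - L i)) < ennreal \<delta>" using H LA by blast
  then obtain Y where Y: "\<And>i. Y i \<in> B" "\<And>i. emeasure M ((L i - Y i) \<union> (Y i - L i)) < ennreal \<delta>"
    by metis
  have BM: "B \<subseteq> sets M" "A \<subseteq> sets M" using sf_sub A B by auto
  have YM: "Y i \<in> sets M" "L i \<in> sets M" for i using Y(1) LA BM by auto
  define D where "D i = (L i - Y i) \<union> (Y i - L i)" for i
  have DM: "D i \<in> sets M" for i unfolding D_def using YM by auto
  have Dm: "measure M (D i) \<le> \<delta>" for i
  proof -
    have "emeasure M (D i) < ennreal \<delta>" using Y(2) unfolding D_def by simp
    then show ?thesis using d by (simp add: emeasure_eq_measure ennreal_less_iff less_imp_le)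
  qed
  define h where "h x = -1 + (\<Sum>i\<in>{1..2*N}. indicator (Y i) x) / real N" for x
  define s where "s x = -1 + (\<Sum>i\<in>{1..2*N}. indicator (L i) x) / real N" for x
  have hm: "h \<in> borel_measurable (sigma (space M) B)" unfolding h_def
    using sf_ind_meas[OF B Y(1)] by measurable
  have hM: "h \<in> borel_measurable M" by (rule sf_meas[OF B hm])
  have gM: "g \<in> borel_measurable M" by (rule sf_meas[OF A g])
  have hb: "\<bar>h x\<bar> \<le> 1" for x
  proof -
    have "(\<Sum>i\<in>{1..2*N}. indicator (Y i) x :: real) \<le> (\<Sum>i\<in>{1..2*N}. 1)"
      by (rule sum_mono) (simp add: indicator_def)
    then have u: "(\<Sum>i\<in>{1..2*N}. indicator (Y i) x :: real) \<le> 2 * real N" by simp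
    have l: "0 \<le> (\<Sum>i\<in>{1..2*N}. indicator (Y i) x :: real)" by (rule sum_nonneg) simp
    have "(\<Sum>i\<in>{1..2*N}. indicator (Y i) x) / real N \<le> 2" using u Np by (simp add: field_simps)
    moreover have "0 \<le> (\<Sum>i\<in>{1..2*N}. indicator (Y i) x) / real N" using l Np by simp
    ultimately show ?thesis unfolding h_def by linarith
  qed
  have gs: "\<bar>g x - s x\<bar> \<le> 1 / real N" if x: "x \<in> space M" for x
  proof -
    have "(\<Sum>i\<in>{1..2*N}. indicator (L i) x :: real) = (\<Sum>i\<in>{1..2*N}. of_bool (-1 + real i / real N \<le> g x))"
      using x unfolding L_def by (simp add: indicator_def)
    then show ?thesis unfolding s_def using staircase[OF N0, of "g x"] gb x by auto
  qed
  have sh: "\<bar>s x - h x\<bar> \<le> (\<Sum>i\<in>{1..2*N}. indicator (D i) x) / real N" for x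
  proof -
    have "s x - h x = (\<Sum>i\<in>{1..2*N}. indicator (L i) x - indicator (Y i) x) / real N"
      unfolding s_def h_def by (simp add: sum_subtractf diff_divide_distrib)
    then have "\<bar>s x - h x\<bar> = \<bar>\<Sum>i\<in>{1..2*N}. indicator (L i) x - indicator (Y i) x\<bar> / real N"
      using Np by simp
    also have "\<dots> \<le> (\<Sum>i\<in>{1..2*N}. \<bar>indicator (L i) x - indicator (Y i) x\<bar>) / real N"
      using Np by (simp add: divide_right_mono sum_abs)
    also have "(\<Sum>i\<in>{1..2*N}. \<bar>indicator (L i) x - indicator (Y i) x\<bar>) = (\<Sum>i\<in>{1..2*N}. indicator (D i) x :: real)"
      by (rule sum.cong) (auto simp: D_def indicator_def)
    finally show ?thesis .
  qed
  have intD: "integrable M (\<lambda>x. (\<Sum>i\<in>{1..2*N}. indicator (D i) x) / real N :: real)"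
    using DM by (intro integrable_divide integrable_sum) (auto intro!: integrable_real_indicator simp: emeasure_eq_measure)
  have "(\<integral>x. \<bar>g x - h x\<bar> \<partial>M) \<le> (\<integral>x. 1 / real N + (\<Sum>i\<in>{1..2*N}. indicator (D i) x) / real N \<partial>M)"
  proof (rule integral_mono_AE)
    show "integrable M (\<lambda>x. \<bar>g x - h x\<bar>)"
    proof (rule integrable_const_bound[where B=2])
      show "AE x in M. norm \<bar>g x - h x\<bar> \<le> 2" using gb hb
        by (intro AE_I2) (smt (verit) real_norm_def)
    qed (use gM hM in measurable)
    show "integrable M (\<lambda>x. 1 / real N + (\<Sum>i\<in>{1..2*N}. indicator (D i) x) / real N)"
      using intD by simp
    show "AE x in M. \<bar>g x - h x\<bar> \<le> 1 / real N + (\<Sum>i\<in>{1..2*N}. indicator (D i) x) / real N"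
      using gs sh by (intro AE_I2) (smt (verit))
  qed
  also have "\<dots> = 1 / real N + (\<Sum>i\<in>{1..2*N}. measure M (D i)) / real N"
  proof -
    have "(\<integral>x. (\<Sum>i\<in>{1..2*N}. indicator (D i) x) \<partial>M) = (\<Sum>i\<in>{1..2*N}. measure M (D i))"
      by (subst Bochner_Integration.integral_sum) (auto intro!: integrable_real_indicator simp: emeasure_eq_measure DM)
    then show ?thesis using intD by (simp add: prob_space)
  qed
  also have "\<dots> \<le> \<delta> + (\<Sum>i\<in>{1..2*N}. \<delta>) / real N"
    using Nd Dm Np by (intro add_mono divide_right_mono sum_mono) auto
  also have "\<dots> = 3 * \<delta>" using Np by (simp add: field_simps)
  finally show ?thesis using hm hb by blast
qed

end

lemma powr_convex0:
  fixes a b t r :: real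
  assumes r: "r \<ge> 1" and a: "a \<ge> 0" and b: "b \<ge> 0" and t: "0 \<le> t" "t \<le> 1"
  shows "((1-t)*a + t*b) powr r \<le> (1-t) * a powr r + t * b powr r"
proof -
  have key: "(v * c) powr r \<le> v * c powr r" if "0 \<le> v" "v \<le> 1" "c \<ge> 0" for v c :: real
  proof -
    have "(v * c) powr r = v powr r * c powr r" using that by (simp add: powr_mult)
    also have "\<dots> \<le> v powr 1 * c powr r" using that r by (intro mult_right_mono powr_mono') auto
    also have "\<dots> = v * c powr r" using that by simp
    finally show ?thesis .
  qed
  show ?thesis
  proof (cases "a > 0 \<and> b > 0")
    case True
    have "convex_on {0<..} (\<lambda>x::real. x powr r)" using r by (rule powr_convex)
    from convex_onD[OF this, of t a b] True t show ?thesis by simp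
  next
    case False
    then have "a = 0 \<or> b = 0" using a b by auto
    then show ?thesis
    proof
      assume "a = 0" then show ?thesis using key[of t b] t b r by simp
    next
      assume "b = 0" then show ?thesis using key[of "1-t" a] t a r by simp
    qed
  qed
qed

lemma convex_abs_powr: assumes r: "r \<ge> 1" shows "convex_on UNIV (\<lambda>x::real. \<bar>x\<bar> powr r)"
proof (rule convex_onI)
  fix t x y :: real assume t: "t > 0" "t < 1"
  have "\<bar>(1 - t) *\<^sub>R x + t *\<^sub>R y\<bar> powr r \<le> ((1-t)*\<bar>x\<bar> + t*\<bar>y\<bar>) powr r"
    using t r by (intro powr_mono2) (auto simp: abs_mult intro: order.trans[OF abs_triangle_ineq])
  also have "\<dots> \<le> (1-t) * \<bar>x\<bar> powr r + t * \<bar>y\<bar> powr r" using t r by (intro powr_convex0) auto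
  finally show "\<bar>(1 - t) *\<^sub>R x + t *\<^sub>R y\<bar> powr r \<le> (1-t) * \<bar>x\<bar> powr r + t * \<bar>y\<bar> powr r" .
qed simp

context prob_space begin

lemma ce_jensen:
  assumes A: "sigma_subfield M A" and r: "r \<ge> 1" and fi: "integrable M f"
    and fri: "integrable M (\<lambda>x. \<bar>f x\<bar> powr r)"
  shows "AE x in M. \<bar>real_cond_exp M (sigma (space M) A) f x\<bar> powr r
            \<le> real_cond_exp M (sigma (space M) A) (\<lambda>x. \<bar>f x\<bar> powr r) x"
proof -
  interpret S: finite_measure_subalgebra M "sigma (space M) A" by (rule sf_fms[OF A])
  show ?thesis
    by (rule S.real_cond_exp_jensens_inequality(2)[of f UNIV, OF fi _ _ fri convex_abs_powr[OF r]]) auto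
qed

lemma ce_powr_nn:
  assumes A: "sigma_subfield M A" and r: "r \<ge> 1" and fi: "integrable M f"
    and fri: "integrable M (\<lambda>x. \<bar>f x\<bar> powr r)"
  shows "(\<integral>\<^sup>+x. ennreal (\<bar>real_cond_exp M (sigma (space M) A) f x\<bar> powr r) \<partial>M)
     \<le> (\<integral>\<^sup>+x. ennreal (\<bar>f x\<bar> powr r) \<partial>M)"
proof -
  interpret S: finite_measure_subalgebra M "sigma (space M) A" by (rule sf_fms[OF A])
  let ?E = "real_cond_exp M (sigma (space M) A)"
  have "(\<integral>\<^sup>+x. ennreal (\<bar>?E f x\<bar> powr r) \<partial>M) \<le> (\<integral>\<^sup>+x. ennreal (?E (\<lambda>x. \<bar>f x\<bar> powr r) x) \<partial>M)"
    using ce_jensen[OF A r fi fri] by (intro nn_integral_mono_AE) (auto simp: ennreal_leI)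
  also have "\<dots> = ennreal (\<integral>x. ?E (\<lambda>x. \<bar>f x\<bar> powr r) x \<partial>M)"
    by (rule nn_integral_eq_integral) (use S.real_cond_exp_int(1)[OF fri] S.real_cond_exp_pos[OF _ borel_measurable_integrable[OF fri]] in auto)
  also have "\<dots> = ennreal (\<integral>x. \<bar>f x\<bar> powr r \<partial>M)" using S.real_cond_exp_int(2)[OF fri] by simp
  also have "\<dots> = (\<integral>\<^sup>+x. ennreal (\<bar>f x\<bar> powr r) \<partial>M)"
    by (rule nn_integral_eq_integral[symmetric]) (use fri in auto)
  finally show ?thesis .
qed

lemma ce_L1:
  assumes A: "sigma_subfield M A" and fi: "integrable M f"
  shows "(\<integral>x. \<bar>real_cond_exp M (sigma (space M) A) f x\<bar> \<partial>M) \<le> (\<integral>x. \<bar>f x\<bar> \<partial>M)"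
proof -
  interpret S: finite_measure_subalgebra M "sigma (space M) A" by (rule sf_fms[OF A])
  let ?E = "real_cond_exp M (sigma (space M) A)"
  have fai: "integrable M (\<lambda>x. \<bar>f x\<bar> powr 1)" using fi by simp
  have "(\<integral>x. \<bar>?E f x\<bar> \<partial>M) \<le> (\<integral>x. ?E (\<lambda>x. \<bar>f x\<bar> powr 1) x \<partial>M)"
    using ce_jensen[OF A order.refl fi fai] S.real_cond_exp_int(1)[OF fi] S.real_cond_exp_int(1)[OF fai]
    by (intro integral_mono_AE) auto
  also have "\<dots> = (\<integral>x. \<bar>f x\<bar> \<partial>M)" using S.real_cond_exp_int(2)[OF fai] by simp
  finally show ?thesis .
qed

lemma approx_resid:
  assumes A: "sigma_subfield M A" and vi: "integrable M v"
    and hm: "h \<in> borel_measurable (sigma (space M) A)" and hi: "integrable M h"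
  shows "(\<integral>x. \<bar>v x - real_cond_exp M (sigma (space M) A) v x\<bar> \<partial>M) \<le> 2 * (\<integral>x. \<bar>v x - h x\<bar> \<partial>M)"
proof -
  interpret S: finite_measure_subalgebra M "sigma (space M) A" by (rule sf_fms[OF A])
  let ?E = "real_cond_exp M (sigma (space M) A)"
  have wi: "integrable M (\<lambda>x. v x - h x)" using vi hi by simp
  have ae: "AE x in M. v x - ?E v x = (v x - h x) - ?E (\<lambda>x. v x - h x) x"
    using S.real_cond_exp_F_meas[OF hi hm] S.real_cond_exp_diff[OF vi hi] by auto
  have "(\<integral>x. \<bar>v x - ?E v x\<bar> \<partial>M) = (\<integral>x. \<bar>(v x - h x) - ?E (\<lambda>x. v x - h x) x\<bar> \<partial>M)"
    using ae by (intro integral_cong_AE) (use vi hi S.real_cond_exp_int(1)[OF vi] S.real_cond_exp_int(1)[OF wi] in auto)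
  also have "\<dots> \<le> (\<integral>x. \<bar>v x - h x\<bar> + \<bar>?E (\<lambda>x. v x - h x) x\<bar> \<partial>M)"
    by (intro integral_mono) (use wi S.real_cond_exp_int(1)[OF wi] in auto)
  also have "\<dots> = (\<integral>x. \<bar>v x - h x\<bar> \<partial>M) + (\<integral>x. \<bar>?E (\<lambda>x. v x - h x) x\<bar> \<partial>M)"
    by (intro Bochner_Integration.integral_add) (use wi S.real_cond_exp_int(1)[OF wi] in auto)
  also have "\<dots> \<le> 2 * (\<integral>x. \<bar>v x - h x\<bar> \<partial>M)" using ce_L1[OF A wi] by simp
  finally show ?thesis .
qed

end

context prob_space begin

lemma bdd_integrable:
  fixes f :: "'a \<Rightarrow> real"
  assumes "f \<in> borel_measurable M" "\<forall>x\<in>space M. \<bar>f x\<bar> \<le> c"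
  shows "integrable M f"
  by (rule integrable_const_bound[where B=c]) (use assms in auto)

lemma clip_ae:
  assumes A: "sigma_subfield M A" and fi: "integrable M f" and fb: "AE x in M. \<bar>f x\<bar> \<le> 1"
  shows "AE x in M. max (-1) (min 1 (real_cond_exp M (sigma (space M) A) f x)) = real_cond_exp M (sigma (space M) A) f x"
proof -
  interpret S: finite_measure_subalgebra M "sigma (space M) A" by (rule sf_fms[OF A])
  have "AE x in M. real_cond_exp M (sigma (space M) A) f x \<le> 1"
    by (rule S.real_cond_exp_le_c[OF fi]) (use fb in auto)
  moreover have "AE x in M. real_cond_exp M (sigma (space M) A) f x \<ge> -1"
    by (rule S.real_cond_exp_ge_c[OF fi]) (use fb in auto)
  ultimately show ?thesis by auto
qed

lemma core_L1:
  assumes A: "sigma_subfield M A" and B: "sigma_subfield M B" and d: "\<delta> > 0"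
    and HAB: "\<forall>X\<in>A. \<exists>Y\<in>B. emeasure M ((X - Y) \<union> (Y - X)) < ennreal \<delta>"
    and HBA: "\<forall>X\<in>B. \<exists>Y\<in>A. emeasure M ((X - Y) \<union> (Y - X)) < ennreal \<delta>"
    and fm: "f \<in> borel_measurable M" and fb: "\<forall>x\<in>space M. \<bar>f x\<bar> \<le> 1"
  shows "(\<integral>x. \<bar>real_cond_exp M (sigma (space M) A) f x - real_cond_exp M (sigma (space M) B) f x\<bar> \<partial>M) \<le> 12 * \<delta>"
proof -
  interpret SA: finite_measure_subalgebra M "sigma (space M) A" by (rule sf_fms[OF A])
  interpret SB: finite_measure_subalgebra M "sigma (space M) B" by (rule sf_fms[OF B])
  define EA where "EA = real_cond_exp M (sigma (space M) A)"
  define EB where "EB = real_cond_exp M (sigma (space M) B)"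
  have EAm[measurable]: "EA w \<in> borel_measurable (sigma (space M) A)" "EA w \<in> borel_measurable M" for w
    unfolding EA_def by auto
  have EBm[measurable]: "EB w \<in> borel_measurable (sigma (space M) B)" "EB w \<in> borel_measurable M" for w
    unfolding EB_def by auto
  have fi: "integrable M f" by (rule bdd_integrable[OF fm fb])
  define g where "g x = max (-1) (min 1 (EA f x))" for x
  have gm: "g \<in> borel_measurable (sigma (space M) A)" unfolding g_def by measurable
  have gM: "g \<in> borel_measurable M" by (rule sf_meas[OF A gm])
  have gb: "\<forall>x\<in>space M. \<bar>g x\<bar> \<le> 1" unfolding g_def by auto
  have gi: "integrable M g" by (rule bdd_integrable[OF gM gb])
  have gae: "AE x in M. g x = EA f x" unfolding g_def EA_def by (rule clip_ae[OF A fi]) (use fb in auto)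
  obtain h where hm: "h \<in> borel_measurable (sigma (space M) B)" and hb: "\<forall>x. \<bar>h x\<bar> \<le> 1"
    and gh: "(\<integral>x. \<bar>g x - h x\<bar> \<partial>M) \<le> 3 * \<delta>"
    using approx_meas[OF A B d HAB gm gb] by blast
  have hi: "integrable M h" by (rule bdd_integrable[OF sf_meas[OF B hm]]) (use hb in auto)
  have T1: "(\<integral>x. \<bar>g x - EB g x\<bar> \<partial>M) \<le> 6 * \<delta>"
    using approx_resid[OF B gi hm hi] gh unfolding EB_def by linarith
  define u where "u x = f x - g x" for x
  have ui: "integrable M u" unfolding u_def using fi gi by simp
  have uM: "u \<in> borel_measurable M" using ui by auto
  define k where "k x = sgn (EB u x)" for x
  have km: "k \<in> borel_measurable (sigma (space M) B)" unfolding k_def by measurable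
  have kM: "k \<in> borel_measurable M" by (rule sf_meas[OF B km])
  have kb: "\<forall>x. \<bar>k x\<bar> \<le> 1" unfolding k_def by (simp add: abs_sgn_eq)
  have ki: "integrable M k" by (rule bdd_integrable[OF kM]) (use kb in auto)
  define kk where "kk x = max (-1) (min 1 (EA k x))" for x
  have kkm: "kk \<in> borel_measurable (sigma (space M) A)" unfolding kk_def by measurable
  have kkM: "kk \<in> borel_measurable M" by (rule sf_meas[OF A kkm])
  have kkb: "\<forall>x. \<bar>kk x\<bar> \<le> 1" unfolding kk_def by auto
  have kki: "integrable M kk" by (rule bdd_integrable[OF kkM]) (use kkb in auto)
  have kkae: "AE x in M. kk x = EA k x" unfolding kk_def EA_def by (rule clip_ae[OF A ki]) (use kb in auto)
  obtain h' where h'm: "h' \<in> borel_measurable (sigma (space M) A)" and h'b: "\<forall>x. \<bar>h' x\<bar> \<le> 1"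
    and kh: "(\<integral>x. \<bar>k x - h' x\<bar> \<partial>M) \<le> 3 * \<delta>"
    using approx_meas[OF B A d HBA km] kb by blast
  have h'i: "integrable M h'" by (rule bdd_integrable[OF sf_meas[OF A h'm]]) (use h'b in auto)
  have Te: "(\<integral>x. \<bar>k x - kk x\<bar> \<partial>M) \<le> 6 * \<delta>"
  proof -
    have "(\<integral>x. \<bar>k x - kk x\<bar> \<partial>M) = (\<integral>x. \<bar>k x - EA k x\<bar> \<partial>M)"
      using kkae kM kkM by (intro integral_cong_AE) auto
    also have "\<dots> \<le> 6 * \<delta>" using approx_resid[OF A ki h'm h'i] kh unfolding EA_def by linarith
    finally show ?thesis .
  qed
  have bprod: "integrable M (\<lambda>x. a x * w x)" if "a \<in> borel_measurable M" "\<forall>x. \<bar>a x\<bar> \<le> 1" "integrable M w" for a w :: "'a \<Rightarrow> real"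
    by (rule Bochner_Integration.integrable_bound[OF that(3)]) (use that in \<open>auto simp: abs_mult intro!: mult_left_le_one_le\<close>)
  have Ta: "(\<integral>x. \<bar>EB u x\<bar> \<partial>M) = (\<integral>x. k x * EB u x \<partial>M)"
    by (rule Bochner_Integration.integral_cong) (auto simp: k_def sgn_real_def)
  have Tb: "(\<integral>x. k x * EB u x \<partial>M) = (\<integral>x. k x * u x \<partial>M)"
    unfolding EB_def by (rule SB.real_cond_exp_intg(2)[OF bprod[OF kM kb ui] km uM])
  have Td1: "(\<integral>x. g x * EA k x \<partial>M) = (\<integral>x. g x * k x \<partial>M)"
    unfolding EA_def by (rule SA.real_cond_exp_intg(2)[OF _ gm kM]) (use bprod[OF kM kb gi] in \<open>simp add: mult.commute\<close>)
  have Td2: "(\<integral>x. g x * EA k x \<partial>M) = (\<integral>x. g x * kk x \<partial>M)"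
  proof (rule integral_cong_AE)
    show "(\<lambda>x. g x * EA k x) \<in> borel_measurable M" using gM by (intro borel_measurable_times) auto
    show "(\<lambda>x. g x * kk x) \<in> borel_measurable M" using gM kkM by (intro borel_measurable_times)
    show "AE x in M. g x * EA k x = g x * kk x" using kkae by eventually_elim simp
  qed
  have Td3: "(\<integral>x. kk x * EA f x \<partial>M) = (\<integral>x. kk x * f x \<partial>M)"
    unfolding EA_def by (rule SA.real_cond_exp_intg(2)[OF bprod[OF kkM kkb fi] kkm fm])
  have Td4: "(\<integral>x. kk x * EA f x \<partial>M) = (\<integral>x. kk x * g x \<partial>M)"
  proof (rule integral_cong_AE)
    show "(\<lambda>x. kk x * EA f x) \<in> borel_measurable M" using kkM by (intro borel_measurable_times) auto
    show "(\<lambda>x. kk x * g x) \<in> borel_measurable M" using gM kkM by (intro borel_measurable_times)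
    show "AE x in M. kk x * EA f x = kk x * g x" using gae by eventually_elim simp
  qed
  have Td: "(\<integral>x. k x * g x \<partial>M) = (\<integral>x. kk x * f x \<partial>M)"
    using Td1 Td2 Td3 Td4 by (simp add: mult.commute)
  have "(\<integral>x. k x * u x \<partial>M) = (\<integral>x. k x * f x \<partial>M) - (\<integral>x. k x * g x \<partial>M)"
    unfolding u_def using bprod[OF kM kb fi] bprod[OF kM kb gi]
    by (simp add: right_diff_distrib Bochner_Integration.integral_diff)
  also have "\<dots> = (\<integral>x. (k x - kk x) * f x \<partial>M)"
    unfolding Td using bprod[OF kM kb fi] bprod[OF kkM kkb fi]
    by (simp add: left_diff_distrib Bochner_Integration.integral_diff)
  also have "\<dots> \<le> (\<integral>x. \<bar>k x - kk x\<bar> \<partial>M)"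
  proof (rule integral_mono)
    show "integrable M (\<lambda>x. (k x - kk x) * f x)"
      using bprod[OF kM kb fi] bprod[OF kkM kkb fi] by (simp add: left_diff_distrib)
    show "integrable M (\<lambda>x. \<bar>k x - kk x\<bar>)" using ki kki by simp
    fix x assume "x \<in> space M"
    then have "\<bar>f x\<bar> \<le> 1" using fb by auto
    have "(k x - kk x) * f x \<le> \<bar>(k x - kk x) * f x\<bar>" by simp
    also have "\<dots> = \<bar>k x - kk x\<bar> * \<bar>f x\<bar>" by (simp add: abs_mult)
    also have "\<dots> \<le> \<bar>k x - kk x\<bar> * 1" using \<open>\<bar>f x\<bar> \<le> 1\<close> by (intro mult_left_mono) simp_all
    finally show "(k x - kk x) * f x \<le> \<bar>k x - kk x\<bar>" by simp
  qed
  finally have T2: "(\<integral>x. \<bar>EB u x\<bar> \<partial>M) \<le> 6 * \<delta>" using Ta Tb Te by linarith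
  have EBui: "integrable M (EB u)" unfolding EB_def using SB.real_cond_exp_int(1)[OF ui] .
  have EBgi: "integrable M (EB g)" unfolding EB_def using SB.real_cond_exp_int(1)[OF gi] .
  have fin: "AE x in M. EA f x - EB f x = (g x - EB g x) - EB u x"
  proof -
    have "AE x in M. EB u x = EB f x - EB g x"
      unfolding EB_def u_def by (rule SB.real_cond_exp_diff[OF fi gi])
    then show ?thesis using gae by auto
  qed
  have "(\<integral>x. \<bar>EA f x - EB f x\<bar> \<partial>M) = (\<integral>x. \<bar>(g x - EB g x) - EB u x\<bar> \<partial>M)"
    using fin gM by (intro integral_cong_AE) auto
  also have "\<dots> \<le> (\<integral>x. \<bar>g x - EB g x\<bar> + \<bar>EB u x\<bar> \<partial>M)"
    by (intro integral_mono) (use gi EBgi EBui in auto)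
  also have "\<dots> = (\<integral>x. \<bar>g x - EB g x\<bar> \<partial>M) + (\<integral>x. \<bar>EB u x\<bar> \<partial>M)"
    by (intro Bochner_Integration.integral_add) (use gi EBgi EBui in auto)
  also have "\<dots> \<le> 12 * \<delta>" using T1 T2 by linarith
  finally show ?thesis unfolding EA_def EB_def .
qed

end

lemma powr3:
  fixes a b c r :: real assumes r: "r \<ge> 1"
  shows "\<bar>a + b + c\<bar> powr r \<le> 3 powr r * (\<bar>a\<bar> powr r + \<bar>b\<bar> powr r + \<bar>c\<bar> powr r)"
proof -
  define m where "m = max \<bar>a\<bar> (max \<bar>b\<bar> \<bar>c\<bar>)"
  have m0: "m \<ge> 0" unfolding m_def by simp
  have "\<bar>a + b + c\<bar> \<le> 3 * m" unfolding m_def by linarith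
  then have "\<bar>a + b + c\<bar> powr r \<le> (3 * m) powr r" using r by (intro powr_mono2) auto
  also have "\<dots> = 3 powr r * m powr r" using m0 by (simp add: powr_mult)
  also have "m powr r \<le> \<bar>a\<bar> powr r + \<bar>b\<bar> powr r + \<bar>c\<bar> powr r"
    unfolding m_def by (auto simp: max_def)
  then have "3 powr r * m powr r \<le> 3 powr r * (\<bar>a\<bar> powr r + \<bar>b\<bar> powr r + \<bar>c\<bar> powr r)"
    by (intro mult_left_mono) auto
  finally show ?thesis .
qed

context prob_space begin

lemma core_Lq_bdd:
  assumes A: "sigma_subfield M A" and B: "sigma_subfield M B" and d: "\<delta> > 0"
    and HAB: "\<forall>X\<in>A. \<exists>Y\<in>B. emeasure M ((X - Y) \<union> (Y - X)) < ennreal \<delta>"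
    and HBA: "\<forall>X\<in>B. \<exists>Y\<in>A. emeasure M ((X - Y) \<union> (Y - X)) < ennreal \<delta>"
    and fm: "f \<in> borel_measurable M" and K: "K > 0" and fb: "\<forall>x\<in>space M. \<bar>f x\<bar> \<le> K"
    and r: "r \<ge> 1"
  shows "(\<integral>\<^sup>+x. ennreal (\<bar>real_cond_exp M (sigma (space M) A) f x - real_cond_exp M (sigma (space M) B) f x\<bar> powr r) \<partial>M)
     \<le> ennreal ((2*K) powr (r-1) * K * (12 * \<delta>))"
proof -
  interpret SA: finite_measure_subalgebra M "sigma (space M) A" by (rule sf_fms[OF A])
  interpret SB: finite_measure_subalgebra M "sigma (space M) B" by (rule sf_fms[OF B])
  define EA where "EA = real_cond_exp M (sigma (space M) A)"
  define EB where "EB = real_cond_exp M (sigma (space M) B)"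
  have EAm[measurable]: "EA w \<in> borel_measurable M" for w unfolding EA_def by auto
  have EBm[measurable]: "EB w \<in> borel_measurable M" for w unfolding EB_def by auto
  define f' where "f' x = f x / K" for x
  have f'm: "f' \<in> borel_measurable M" unfolding f'_def using fm by measurable
  have f'b: "\<forall>x\<in>space M. \<bar>f' x\<bar> \<le> 1" unfolding f'_def using fb K by (auto simp: abs_div)
  have fi: "integrable M f" by (rule bdd_integrable[OF fm fb])
  have f'i: "integrable M f'" by (rule bdd_integrable[OF f'm f'b])
  have L1: "(\<integral>x. \<bar>EA f' x - EB f' x\<bar> \<partial>M) \<le> 12 * \<delta>"
    unfolding EA_def EB_def by (rule core_L1[OF A B d HAB HBA f'm f'b])
  have aeA: "AE x in M. EA f' x = EA f x / K" unfolding EA_def f'_def by (rule SA.real_cond_exp_cdiv[OF fi])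
  have aeB: "AE x in M. EB f' x = EB f x / K" unfolding EB_def f'_def by (rule SB.real_cond_exp_cdiv[OF fi])
  have bA: "AE x in M. \<bar>EA f x\<bar> \<le> K"
  proof -
    have "AE x in M. EA f x \<le> K" unfolding EA_def by (rule SA.real_cond_exp_le_c[OF fi]) (use fb in \<open>auto intro!: AE_I2 simp: abs_le_iff\<close>)
    moreover have "AE x in M. EA f x \<ge> -K" unfolding EA_def by (rule SA.real_cond_exp_ge_c[OF fi]) (use fb in \<open>auto intro!: AE_I2 simp: abs_le_iff\<close>)
    ultimately show ?thesis by auto
  qed
  have bB: "AE x in M. \<bar>EB f x\<bar> \<le> K"
  proof -
    have "AE x in M. EB f x \<le> K" unfolding EB_def by (rule SB.real_cond_exp_le_c[OF fi]) (use fb in \<open>auto intro!: AE_I2 simp: abs_le_iff\<close>)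
    moreover have "AE x in M. EB f x \<ge> -K" unfolding EB_def by (rule SB.real_cond_exp_ge_c[OF fi]) (use fb in \<open>auto intro!: AE_I2 simp: abs_le_iff\<close>)
    ultimately show ?thesis by auto
  qed
  define c where "c = (2*K) powr (r-1) * K"
  have c0: "c \<ge> 0" unfolding c_def using K by simp
  have pw: "AE x in M. \<bar>EA f x - EB f x\<bar> powr r \<le> c * \<bar>EA f' x - EB f' x\<bar>"
    using aeA aeB bA bB
  proof eventually_elim
    case (elim x)
    define t where "t = \<bar>EA f x - EB f x\<bar>"
    have t0: "t \<ge> 0" and t2: "t \<le> 2*K" unfolding t_def using elim by auto
    have teq: "t = K * \<bar>EA f' x - EB f' x\<bar>" unfolding t_def using elim K
      by (simp add: diff_divide_distrib[symmetric] abs_div)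
    have "t powr (r - 1) * t powr 1 = t powr (r - 1 + 1)" by (rule powr_add[symmetric])
    then have "t powr r = t powr (r - 1) * t" using t0 by simp
    also have "\<dots> \<le> (2*K) powr (r-1) * t" using t0 t2 r by (intro mult_right_mono powr_mono2) auto
    finally have "t powr r \<le> (2*K) powr (r-1) * t" .
    then show ?case unfolding c_def using teq unfolding t_def by (simp add: mult.assoc)
  qed
  have "(\<integral>\<^sup>+x. ennreal (\<bar>EA f x - EB f x\<bar> powr r) \<partial>M) \<le> (\<integral>\<^sup>+x. ennreal (c * \<bar>EA f' x - EB f' x\<bar>) \<partial>M)"
    using pw by (intro nn_integral_mono_AE) (auto simp: ennreal_leI)
  also have "\<dots> = ennreal (\<integral>x. c * \<bar>EA f' x - EB f' x\<bar> \<partial>M)"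
  proof (rule nn_integral_eq_integral)
    have "integrable M (EA f')" "integrable M (EB f')"
      unfolding EA_def EB_def using SA.real_cond_exp_int(1)[OF f'i] SB.real_cond_exp_int(1)[OF f'i] by auto
    then show "integrable M (\<lambda>x. c * \<bar>EA f' x - EB f' x\<bar>)" by auto
  qed (use c0 in auto)
  also have "\<dots> \<le> ennreal (c * (12 * \<delta>))" using L1 c0 by (intro ennreal_leI) (auto intro: mult_left_mono)
  finally show ?thesis unfolding EA_def EB_def c_def .
qed

end

context prob_space begin
lemma lp_to_nn:
  assumes "lp_norm M p f \<le> 1" "p \<noteq> \<infinity>" "enn2real p > 0"
  shows "(\<integral>\<^sup>+x. ennreal (\<bar>f x\<bar> powr enn2real p) \<partial>M) \<le> 1"
proof -
  define I where "I = (\<integral>\<^sup>+x. ennreal (\<bar>f x\<bar> powr enn2real p) \<partial>M)"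
  have I: "I \<noteq> \<infinity>" "ennreal (enn2real I powr (1 / enn2real p)) \<le> 1"
    using assms(1,2) unfolding lp_norm_def Let_def I_def[symmetric] by (auto split: if_splits simp: top_unique)
  have h: "enn2real I powr (1 / enn2real p) \<le> 1" using I(2) by (simp add: ennreal_le_1)
  have "enn2real I \<le> 1"
  proof (rule ccontr)
    assume "\<not> enn2real I \<le> 1"
    then have "enn2real I > 1" by simp
    then have "enn2real I powr (1 / enn2real p) > 1" using assms(3) by (intro gr_one_powr) auto
    then show False using h by simp
  qed
  then have "ennreal (enn2real I) \<le> ennreal 1" by (rule ennreal_leI)
  moreover have "ennreal (enn2real I) = I" using I(1) by (simp add: ennreal_enn2real_if)
  ultimately show ?thesis unfolding I_def[symmetric] by simp
qed

lemma nn_to_lq: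
  assumes r: "r > 0" and e: "\<epsilon> > 0"
    and "(\<integral>\<^sup>+x. ennreal (\<bar>d x\<bar> powr r) \<partial>M) \<le> ennreal (\<epsilon> powr r)"
  shows "lp_norm M (ennreal r) d \<le> ennreal \<epsilon>"
proof -
  define I where "I = (\<integral>\<^sup>+x. ennreal (\<bar>d x\<bar> powr r) \<partial>M)"
  have I: "I \<noteq> \<infinity>" "enn2real I \<le> \<epsilon> powr r" using assms(3) unfolding I_def[symmetric]
    by (auto simp: top_unique enn2real_leI)
  have "enn2real I powr (1/r) \<le> (\<epsilon> powr r) powr (1/r)" using I r by (intro powr_mono2) auto
  also have "\<dots> = \<epsilon>" using r e by (simp add: powr_powr)
  finally have "enn2real I powr (1/r) \<le> \<epsilon>" .
  moreover have er: "enn2real (ennreal r) = r" using r by simp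
  ultimately show ?thesis using I(1) r unfolding lp_norm_def Let_def er I_def[symmetric]
    by (auto intro: ennreal_leI)
qed

lemma lq_to_nn:
  assumes r: "r > 0" and e: "\<epsilon> > 0"
    and "lp_norm M (ennreal r) d \<le> ennreal \<epsilon>"
  shows "(\<integral>\<^sup>+x. ennreal (\<bar>d x\<bar> powr r) \<partial>M) \<le> ennreal (\<epsilon> powr r)"
proof -
  define I where "I = (\<integral>\<^sup>+x. ennreal (\<bar>d x\<bar> powr r) \<partial>M)"
  have er: "enn2real (ennreal r) = r" using r by simp
  have I: "I \<noteq> \<infinity>" "ennreal (enn2real I powr (1 / r)) \<le> ennreal \<epsilon>"
    using assms(3) r unfolding lp_norm_def Let_def er I_def[symmetric] by (auto split: if_splits simp: top_unique)
  have "enn2real I powr (1/r) \<le> \<epsilon>" using I(2) e by (simp add: ennreal_le_iff)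
  then have "(enn2real I powr (1/r)) powr r \<le> \<epsilon> powr r" using r by (intro powr_mono2) auto
  then have "enn2real I \<le> \<epsilon> powr r" using r by (simp add: powr_powr)
  then have "ennreal (enn2real I) \<le> ennreal (\<epsilon> powr r)" by (rule ennreal_leI)
  moreover have "ennreal (enn2real I) = I" using I(1) by (simp add: ennreal_enn2real_if)
  ultimately show ?thesis unfolding I_def[symmetric] by simp
qed

end

context prob_space begin

lemma bound_inf:
  assumes A: "sigma_subfield M A" and B: "sigma_subfield M B" and d: "\<delta> > 0"
    and HAB: "\<forall>X\<in>A. \<exists>Y\<in>B. emeasure M ((X - Y) \<union> (Y - X)) < ennreal \<delta>"
    and HBA: "\<forall>X\<in>B. \<exists>Y\<in>A. emeasure M ((X - Y) \<union> (Y - X)) < ennreal \<delta>"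
    and r: "r \<ge> 1" and fm: "f \<in> borel_measurable M" and fb: "AE x in M. \<bar>f x\<bar> \<le> 1"
  shows "(\<integral>\<^sup>+x. ennreal (\<bar>real_cond_exp M (sigma (space M) A) f x - real_cond_exp M (sigma (space M) B) f x\<bar> powr r) \<partial>M)
     \<le> ennreal (2 powr (r-1) * (12 * \<delta>))"
proof -
  interpret SA: finite_measure_subalgebra M "sigma (space M) A" by (rule sf_fms[OF A])
  interpret SB: finite_measure_subalgebra M "sigma (space M) B" by (rule sf_fms[OF B])
  define f1 where "f1 x = max (-1) (min 1 (f x))" for x
  have f1m: "f1 \<in> borel_measurable M" unfolding f1_def using fm by measurable
  have f1b: "\<forall>x\<in>space M. \<bar>f1 x\<bar> \<le> (1::real)" unfolding f1_def by auto
  have ae: "AE x in M. f x = f1 x" using fb unfolding f1_def by eventually_elim auto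
  have eA: "AE x in M. real_cond_exp M (sigma (space M) A) f x = real_cond_exp M (sigma (space M) A) f1 x"
    by (rule SA.real_cond_exp_cong[OF ae fm f1m])
  have eB: "AE x in M. real_cond_exp M (sigma (space M) B) f x = real_cond_exp M (sigma (space M) B) f1 x"
    by (rule SB.real_cond_exp_cong[OF ae fm f1m])
  have "(\<integral>\<^sup>+x. ennreal (\<bar>real_cond_exp M (sigma (space M) A) f x - real_cond_exp M (sigma (space M) B) f x\<bar> powr r) \<partial>M)
     = (\<integral>\<^sup>+x. ennreal (\<bar>real_cond_exp M (sigma (space M) A) f1 x - real_cond_exp M (sigma (space M) B) f1 x\<bar> powr r) \<partial>M)"
    by (rule nn_integral_cong_AE) (use eA eB in auto)
  also have "\<dots> \<le> ennreal ((2*1) powr (r-1) * 1 * (12 * \<delta>))"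
    by (rule core_Lq_bdd[OF A B d HAB HBA f1m _ f1b r]) simp
  finally show ?thesis by simp
qed

lemma opnorm_le:
  assumes "\<And>f. f \<in> borel_measurable M \<Longrightarrow> lp_norm M p f \<le> 1 \<Longrightarrow>
     lp_norm M q (\<lambda>x. cond_exp M A f x - cond_exp M B f x) \<le> c"
  shows "cond_exp_diff_opnorm M p q A B \<le> c"
  unfolding cond_exp_diff_opnorm_def using assms by (intro SUP_least) auto

lemma lp_inf_ae:
  assumes "lp_norm M \<infinity> f \<le> 1" shows "AE x in M. \<bar>f x\<bar> \<le> 1"
proof -
  have e1: "esssup M (\<lambda>x. ennreal \<bar>f x\<bar>) \<le> 1" using assms by (simp add: lp_norm_def)
  have "AE x in M. ennreal \<bar>f x\<bar> \<le> 1" using esssup_AE[of "\<lambda>x. ennreal \<bar>f x\<bar>" M]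
    by (rule eventually_mono) (use e1 in \<open>blast intro: order.trans\<close>)
  then show ?thesis by eventually_elim (simp add: ennreal_le_1)
qed

end

context prob_space begin

lemma bound_fin:
  assumes A: "sigma_subfield M A" and B: "sigma_subfield M B" and d: "\<delta> > 0"
    and HAB: "\<forall>X\<in>A. \<exists>Y\<in>B. emeasure M ((X - Y) \<union> (Y - X)) < ennreal \<delta>"
    and HBA: "\<forall>X\<in>B. \<exists>Y\<in>A. emeasure M ((X - Y) \<union> (Y - X)) < ennreal \<delta>"
    and r: "r \<ge> 1" and P: "P > r" and K: "K \<ge> 1"
    and fm: "f \<in> borel_measurable M" and fP: "(\<integral>\<^sup>+x. ennreal (\<bar>f x\<bar> powr P) \<partial>M) \<le> 1"
  shows "(\<integral>\<^sup>+x. ennreal (\<bar>real_cond_exp M (sigma (space M) A) f x - real_cond_exp M (sigma (space M) B) f x\<bar> powr r) \<partial>M)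
     \<le> ennreal (3 powr r * ((2*K) powr (r-1) * K * (12 * \<delta>) + 2 * K powr (r - P)))"
proof -
  interpret SA: finite_measure_subalgebra M "sigma (space M) A" by (rule sf_fms[OF A])
  interpret SB: finite_measure_subalgebra M "sigma (space M) B" by (rule sf_fms[OF B])
  define EA where "EA = real_cond_exp M (sigma (space M) A)"
  define EB where "EB = real_cond_exp M (sigma (space M) B)"
  have EAm[measurable]: "EA w \<in> borel_measurable M" for w unfolding EA_def by auto
  have EBm[measurable]: "EB w \<in> borel_measurable M" for w unfolding EB_def by auto
  have K0: "K > 0" using K by simp
  note fm[measurable]
  define f1 where "f1 x = max (-K) (min K (f x))" for x
  define f2 where "f2 x = f x - f1 x" for x
  have f1m[measurable]: "f1 \<in> borel_measurable M" unfolding f1_def using fm by measurable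
  have f2m[measurable]: "f2 \<in> borel_measurable M" unfolding f2_def using fm f1m by measurable
  have f1b: "\<forall>x\<in>space M. \<bar>f1 x\<bar> \<le> K" unfolding f1_def using K by auto
  have f2le: "\<bar>f2 x\<bar> \<le> \<bar>f x\<bar>" for x unfolding f2_def f1_def using K by auto
  have f20: "f2 x = 0" if "\<bar>f x\<bar> \<le> K" for x unfolding f2_def f1_def using that by auto
  have Kp0: "K powr (r - P) > 0" using K0 by simp
  have tail: "\<bar>f2 x\<bar> powr r \<le> K powr (r - P) * \<bar>f x\<bar> powr P" for x
  proof (cases "\<bar>f x\<bar> \<le> K")
    case True then show ?thesis using f20 Kp0 by simp
  next
    case False
    then have fK: "\<bar>f x\<bar> > K" by simp
    have "\<bar>f2 x\<bar> powr r \<le> \<bar>f x\<bar> powr r" using f2le r by (intro powr_mono2) auto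
    also have "\<bar>f x\<bar> powr r = \<bar>f x\<bar> powr (r - P) * \<bar>f x\<bar> powr P"
      by (simp add: powr_add[symmetric])
    also have "\<dots> \<le> K powr (r - P) * \<bar>f x\<bar> powr P"
      using fK K0 P by (intro mult_right_mono powr_mono2') auto
    finally show ?thesis .
  qed
  have nnf2: "(\<integral>\<^sup>+x. ennreal (\<bar>f2 x\<bar> powr r) \<partial>M) \<le> ennreal (K powr (r - P))"
  proof -
    have "(\<integral>\<^sup>+x. ennreal (\<bar>f2 x\<bar> powr r) \<partial>M) \<le> (\<integral>\<^sup>+x. ennreal (K powr (r - P)) * ennreal (\<bar>f x\<bar> powr P) \<partial>M)"
      using tail Kp0 by (intro nn_integral_mono) (auto simp: ennreal_mult[symmetric] intro: ennreal_leI)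
    also have "\<dots> = ennreal (K powr (r - P)) * (\<integral>\<^sup>+x. ennreal (\<bar>f x\<bar> powr P) \<partial>M)"
      by (rule nn_integral_cmult) measurable
    also have "\<dots> \<le> ennreal (K powr (r - P)) * 1" using fP by (intro mult_left_mono) auto
    finally show ?thesis by simp
  qed
  have fi: "integrable M f"
  proof (rule integrableI_bounded)
    have "(\<integral>\<^sup>+x. ennreal (norm (f x)) \<partial>M) \<le> (\<integral>\<^sup>+x. ennreal 1 + ennreal (\<bar>f x\<bar> powr P) \<partial>M)"
    proof (intro nn_integral_mono)
      fix x
      have "\<bar>f x\<bar> \<le> 1 + \<bar>f x\<bar> powr P"
      proof (cases "\<bar>f x\<bar> \<le> 1")
        case True
        have "0 \<le> \<bar>f x\<bar> powr P" by simp
        then show ?thesis using True by linarith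
      next
        case False
        then have "\<bar>f x\<bar> powr 1 \<le> \<bar>f x\<bar> powr P" using P r by (intro powr_mono) auto
        then show ?thesis by simp
      qed
      then have "ennreal \<bar>f x\<bar> \<le> ennreal (1 + \<bar>f x\<bar> powr P)" by (rule ennreal_leI)
      also have "\<dots> = ennreal 1 + ennreal (\<bar>f x\<bar> powr P)" by (rule ennreal_plus) auto
      finally show "ennreal (norm (f x)) \<le> ennreal 1 + ennreal (\<bar>f x\<bar> powr P)" by simp
    qed
    also have "\<dots> = (\<integral>\<^sup>+x. ennreal 1 \<partial>M) + (\<integral>\<^sup>+x. ennreal (\<bar>f x\<bar> powr P) \<partial>M)"
      by (rule nn_integral_add) auto
    also have "\<dots> \<le> 1 + 1" using fP emeasure_space_1 by (intro add_mono) auto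
    also have "\<dots> < \<infinity>" by simp
    finally show "(\<integral>\<^sup>+x. ennreal (norm (f x)) \<partial>M) < \<infinity>" .
  qed (rule fm)
  have f1i: "integrable M f1" by (rule bdd_integrable[OF f1m f1b])
  have f2i: "integrable M f2" unfolding f2_def using fi f1i by simp
  have f2ri: "integrable M (\<lambda>x. \<bar>f2 x\<bar> powr r)"
  proof (rule integrableI_bounded)
    have "(\<integral>\<^sup>+x. ennreal (norm (\<bar>f2 x\<bar> powr r)) \<partial>M) = (\<integral>\<^sup>+x. ennreal (\<bar>f2 x\<bar> powr r) \<partial>M)" by simp
    also have "\<dots> < \<infinity>" using nnf2 by (simp add: le_less_trans)
    finally show "(\<integral>\<^sup>+x. ennreal (norm (\<bar>f2 x\<bar> powr r)) \<partial>M) < \<infinity>" .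
  qed measurable
  have r0: "r \<ge> 1" using r .
  have cA: "(\<integral>\<^sup>+x. ennreal (\<bar>EA f2 x\<bar> powr r) \<partial>M) \<le> ennreal (K powr (r - P))"
    unfolding EA_def using ce_powr_nn[OF A r0 f2i f2ri] nnf2 by (rule order.trans)
  have cB: "(\<integral>\<^sup>+x. ennreal (\<bar>EB f2 x\<bar> powr r) \<partial>M) \<le> ennreal (K powr (r - P))"
    unfolding EB_def using ce_powr_nn[OF B r0 f2i f2ri] nnf2 by (rule order.trans)
  have c1: "(\<integral>\<^sup>+x. ennreal (\<bar>EA f1 x - EB f1 x\<bar> powr r) \<partial>M) \<le> ennreal ((2*K) powr (r-1) * K * (12 * \<delta>))"
    unfolding EA_def EB_def by (rule core_Lq_bdd[OF A B d HAB HBA f1m K0 f1b r])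
  have ff: "(\<lambda>x. f1 x + f2 x) = f" unfolding f2_def by auto
  have addA: "AE x in M. EA f x = EA f1 x + EA f2 x"
    using SA.real_cond_exp_add[OF f1i f2i] unfolding EA_def ff .
  have addB: "AE x in M. EB f x = EB f1 x + EB f2 x"
    using SB.real_cond_exp_add[OF f1i f2i] unfolding EB_def ff .
  define c where "c = 3 powr r"
  have c0: "c > 0" unfolding c_def by simp
  have "(\<integral>\<^sup>+x. ennreal (\<bar>EA f x - EB f x\<bar> powr r) \<partial>M)
      \<le> (\<integral>\<^sup>+x. ennreal c * (ennreal (\<bar>EA f1 x - EB f1 x\<bar> powr r) + ennreal (\<bar>EA f2 x\<bar> powr r) + ennreal (\<bar>EB f2 x\<bar> powr r)) \<partial>M)"
  proof (rule nn_integral_mono_AE)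
    show "AE x in M. ennreal (\<bar>EA f x - EB f x\<bar> powr r)
       \<le> ennreal c * (ennreal (\<bar>EA f1 x - EB f1 x\<bar> powr r) + ennreal (\<bar>EA f2 x\<bar> powr r) + ennreal (\<bar>EB f2 x\<bar> powr r))"
      using addA addB
    proof eventually_elim
      case (elim x)
      have "EA f x - EB f x = (EA f1 x - EB f1 x) + EA f2 x + (- EB f2 x)" using elim by simp
      then have "\<bar>EA f x - EB f x\<bar> powr r \<le> c * (\<bar>EA f1 x - EB f1 x\<bar> powr r + \<bar>EA f2 x\<bar> powr r + \<bar>EB f2 x\<bar> powr r)"
        using powr3[OF r, of "EA f1 x - EB f1 x" "EA f2 x" "- EB f2 x"] unfolding c_def by simp
      then have "ennreal (\<bar>EA f x - EB f x\<bar> powr r) \<le> ennreal (c * (\<bar>EA f1 x - EB f1 x\<bar> powr r + \<bar>EA f2 x\<bar> powr r + \<bar>EB f2 x\<bar> powr r))"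
        by (rule ennreal_leI)
      also have "\<dots> = ennreal c * (ennreal (\<bar>EA f1 x - EB f1 x\<bar> powr r) + ennreal (\<bar>EA f2 x\<bar> powr r) + ennreal (\<bar>EB f2 x\<bar> powr r))"
        using c0 by (simp add: ennreal_mult ennreal_plus)
      finally show ?case .
    qed
  qed
  also have "\<dots> = ennreal c * ((\<integral>\<^sup>+x. ennreal (\<bar>EA f1 x - EB f1 x\<bar> powr r) \<partial>M) + (\<integral>\<^sup>+x. ennreal (\<bar>EA f2 x\<bar> powr r) \<partial>M) + (\<integral>\<^sup>+x. ennreal (\<bar>EB f2 x\<bar> powr r) \<partial>M))"
    by (simp add: nn_integral_cmult nn_integral_add)
  also have "\<dots> \<le> ennreal c * (ennreal ((2*K) powr (r-1) * K * (12 * \<delta>)) + ennreal (K powr (r - P)) + ennreal (K powr (r - P)))"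
    using c1 cA cB by (intro mult_left_mono add_mono) auto
  also have "\<dots> = ennreal (c * ((2*K) powr (r-1) * K * (12 * \<delta>) + 2 * K powr (r - P)))"
  proof -
    define a where "a = (2*K) powr (r-1) * K * (12 * \<delta>)"
    define b where "b = K powr (r - P)"
    have a0: "a \<ge> 0" unfolding a_def using d K0 by simp
    have b0: "b \<ge> 0" unfolding b_def by simp
    have "ennreal (a + 2 * b) = ennreal ((a + b) + b)" by (simp add: algebra_simps)
    also have "\<dots> = ennreal (a + b) + ennreal b" using a0 b0 by (intro ennreal_plus) auto
    also have "ennreal (a + b) = ennreal a + ennreal b" using a0 b0 by (intro ennreal_plus) auto
    finally have e: "ennreal a + ennreal b + ennreal b = ennreal (a + 2 * b)" by simp
    have "ennreal c * (ennreal a + ennreal b + ennreal b) = ennreal (c * (a + 2 * b))"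
      unfolding e using c0 a0 b0 by (simp add: ennreal_mult)
    then show ?thesis unfolding a_def b_def .
  qed
  finally show ?thesis unfolding EA_def EB_def c_def .
qed

end

context prob_space begin

lemma K_choice:
  fixes r P \<epsilon> :: real
  assumes r: "r \<ge> 1" and P: "P > r" and e: "\<epsilon> > 0"
  shows "\<exists>K\<ge>1. 3 powr r * (2 * K powr (r - P)) \<le> \<epsilon> powr r / 2"
proof -
  define Z where "Z = (4 * 3 powr r / \<epsilon> powr r) powr (1/(P-r))"
  define K where "K = max 1 Z"
  have Z0: "Z > 0" unfolding Z_def using e by simp
  have K1: "K \<ge> 1" and KZ: "Z \<le> K" unfolding K_def by auto
  have Zeq: "Z powr (P - r) = 4 * 3 powr r / \<epsilon> powr r" unfolding Z_def using P e by (simp add: powr_powr)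
  have "Z powr (P - r) \<le> K powr (P - r)" using Z0 KZ P by (intro powr_mono2) auto
  then have KP: "4 * 3 powr r / \<epsilon> powr r \<le> K powr (P - r)" unfolding Zeq .
  have "K powr (r - P) = inverse (K powr (P - r))" using powr_minus[of K "P - r"] by simp
  also have "\<dots> \<le> inverse (4 * 3 powr r / \<epsilon> powr r)" using KP e by (intro le_imp_inverse_le) auto
  also have "\<dots> = \<epsilon> powr r / (4 * 3 powr r)" by simp
  finally have "K powr (r - P) \<le> \<epsilon> powr r / (4 * 3 powr r)" .
  then have "3 powr r * (2 * K powr (r - P)) \<le> 3 powr r * (2 * (\<epsilon> powr r / (4 * 3 powr r)))"
    by (intro mult_left_mono) auto
  also have "\<dots> = \<epsilon> powr r / 2" by simp
  finally show ?thesis using K1 by blast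
qed

lemma dir1:
  assumes q1: "1 \<le> q" and qp: "q < p" and e: "\<epsilon> > 0"
  shows "\<exists>\<delta>>0. \<forall>A B. sigma_subfield M A \<longrightarrow> sigma_subfield M B
    \<longrightarrow> (\<forall>X\<in>A. \<exists>Y\<in>B. emeasure M ((X - Y) \<union> (Y - X)) < ennreal \<delta>)
    \<longrightarrow> (\<forall>X\<in>B. \<exists>Y\<in>A. emeasure M ((X - Y) \<union> (Y - X)) < ennreal \<delta>)
    \<longrightarrow> cond_exp_diff_opnorm M p q A B \<le> ennreal \<epsilon>"
proof -
  have qtop: "q < top" using qp top.not_eq_extremum by fastforce
  define r where "r = enn2real q"
  have qr: "q = ennreal r" unfolding r_def using qtop by simp
  have r1: "r \<ge> 1" using q1 unfolding qr by simp
  have r0: "r > 0" using r1 by simp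
  show ?thesis
  proof (cases "p = \<infinity>")
    case True
    define \<delta> where "\<delta> = \<epsilon> powr r / (2 powr (r-1) * 12)"
    have d0: "\<delta> > 0" unfolding \<delta>_def using e by simp
    have dd: "2 powr (r-1) * (12 * \<delta>) = \<epsilon> powr r" unfolding \<delta>_def by simp
    show ?thesis
    proof (intro exI[of _ \<delta>] conjI allI impI d0)
      fix A B assume A: "sigma_subfield M A" and B: "sigma_subfield M B"
        and HAB: "\<forall>X\<in>A. \<exists>Y\<in>B. emeasure M ((X - Y) \<union> (Y - X)) < ennreal \<delta>"
        and HBA: "\<forall>X\<in>B. \<exists>Y\<in>A. emeasure M ((X - Y) \<union> (Y - X)) < ennreal \<delta>"
      show "cond_exp_diff_opnorm M p q A B \<le> ennreal \<epsilon>"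
      proof (rule opnorm_le)
        fix f assume fm: "f \<in> borel_measurable M" and lf: "lp_norm M p f \<le> 1"
        have fb: "AE x in M. \<bar>f x\<bar> \<le> 1" using lf True by (intro lp_inf_ae) simp
        have "(\<integral>\<^sup>+x. ennreal (\<bar>cond_exp M A f x - cond_exp M B f x\<bar> powr r) \<partial>M) \<le> ennreal (\<epsilon> powr r)"
          using bound_inf[OF A B d0 HAB HBA r1 fm fb] unfolding cond_exp_def dd .
        from nn_to_lq[OF r0 e this] show "lp_norm M q (\<lambda>x. cond_exp M A f x - cond_exp M B f x) \<le> ennreal \<epsilon>"
          unfolding qr .
      qed
    qed
  next
    case False
    define P where "P = enn2real p"
    have pP: "p = ennreal P" unfolding P_def using False by (simp add: less_top)
    have "ennreal r < ennreal P" using qp unfolding qr pP .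
    then have rP: "r < P" using r0 by (subst (asm) ennreal_less_iff) auto
    have P0: "P > 0" using rP r0 by simp
    obtain K where K1: "K \<ge> 1" and KK: "3 powr r * (2 * K powr (r - P)) \<le> \<epsilon> powr r / 2"
      using K_choice[OF r1 rP e] by blast
    define \<delta> where "\<delta> = (\<epsilon> powr r / 2) / (3 powr r * ((2*K) powr (r-1) * K * 12))"
    have d0: "\<delta> > 0" unfolding \<delta>_def using e K1 by simp
    have dd: "3 powr r * ((2*K) powr (r-1) * K * (12 * \<delta>)) = \<epsilon> powr r / 2"
      unfolding \<delta>_def using K1 by simp
    have tot: "3 powr r * ((2*K) powr (r-1) * K * (12 * \<delta>) + 2 * K powr (r - P)) \<le> \<epsilon> powr r"
      using dd KK by (simp add: distrib_left)
    show ?thesis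
    proof (intro exI[of _ \<delta>] conjI allI impI d0)
      fix A B assume A: "sigma_subfield M A" and B: "sigma_subfield M B"
        and HAB: "\<forall>X\<in>A. \<exists>Y\<in>B. emeasure M ((X - Y) \<union> (Y - X)) < ennreal \<delta>"
        and HBA: "\<forall>X\<in>B. \<exists>Y\<in>A. emeasure M ((X - Y) \<union> (Y - X)) < ennreal \<delta>"
      show "cond_exp_diff_opnorm M p q A B \<le> ennreal \<epsilon>"
      proof (rule opnorm_le)
        fix f assume fm: "f \<in> borel_measurable M" and lf: "lp_norm M p f \<le> 1"
        have fP: "(\<integral>\<^sup>+x. ennreal (\<bar>f x\<bar> powr P) \<partial>M) \<le> 1"
          using lp_to_nn[OF lf False] P0 unfolding P_def by simp
        have "(\<integral>\<^sup>+x. ennreal (\<bar>cond_exp M A f x - cond_exp M B f x\<bar> powr r) \<partial>M) \<le> ennreal (\<epsilon> powr r)"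
          using bound_fin[OF A B d0 HAB HBA r1 rP K1 fm fP] ennreal_leI[OF tot] unfolding cond_exp_def
          by (rule order.trans)
        from nn_to_lq[OF r0 e this] show "lp_norm M q (\<lambda>x. cond_exp M A f x - cond_exp M B f x) \<le> ennreal \<epsilon>"
          unfolding qr .
      qed
    qed
  qed
qed

end

context prob_space begin

lemma markov_set:
  assumes A: "sigma_subfield M A" and B: "sigma_subfield M B" and X: "X \<in> A" and r: "r > 0"
  shows "\<exists>Y\<in>B. emeasure M ((X - Y) \<union> (Y - X)) \<le> ennreal (2 powr r) *
     (\<integral>\<^sup>+x. ennreal (\<bar>cond_exp M A (indicator X) x - cond_exp M B (indicator X) x\<bar> powr r) \<partial>M)"
proof -
  interpret SA: finite_measure_subalgebra M "sigma (space M) A" by (rule sf_fms[OF A])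
  interpret SB: finite_measure_subalgebra M "sigma (space M) B" by (rule sf_fms[OF B])
  define EA where "EA = real_cond_exp M (sigma (space M) A)"
  define EB where "EB = real_cond_exp M (sigma (space M) B)"
  have EAm[measurable]: "EA w \<in> borel_measurable M" for w unfolding EA_def by auto
  have EBm[measurable]: "EB w \<in> borel_measurable M" for w unfolding EB_def by auto
  define f :: "'a \<Rightarrow> real" where "f = indicator X"
  have XM: "X \<in> sets M" using X sf_sub[OF A] by auto
  have fmA: "f \<in> borel_measurable (sigma (space M) A)" unfolding f_def by (rule sf_ind_meas[OF A X])
  have fm[measurable]: "f \<in> borel_measurable M" unfolding f_def using XM by simp
  have fi: "integrable M f" by (rule bdd_integrable[OF fm, of 1]) (auto simp: f_def indicator_def)
  have fae: "AE x in M. EA f x = f x" unfolding EA_def by (rule SA.real_cond_exp_F_meas[OF fi fmA])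
  define Y where "Y = {x\<in>space M. 1/2 \<le> EB f x}"
  have YB: "Y \<in> B" unfolding Y_def EB_def by (rule sf_set[OF B]) simp
  have YM: "Y \<in> sets M" using YB sf_sub[OF B] by auto
  define S where "S = (X - Y) \<union> (Y - X)"
  have SM: "S \<in> sets M" unfolding S_def using XM YM by auto
  have "emeasure M S = (\<integral>\<^sup>+x. indicator S x \<partial>M)" using SM by simp
  also have "\<dots> \<le> (\<integral>\<^sup>+x. ennreal (2 powr r) * ennreal (\<bar>EA f x - EB f x\<bar> powr r) \<partial>M)"
  proof (rule nn_integral_mono_AE)
    show "AE x in M. indicator S x \<le> ennreal (2 powr r) * ennreal (\<bar>EA f x - EB f x\<bar> powr r)"
      using fae
    proof eventually_elim
      case (elim x)
      show ?case
      proof (cases "x \<in> S")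
        case False then show ?thesis by simp
      next
        case True
        then have xs: "x \<in> space M" unfolding S_def Y_def using XM sets.sets_into_space by auto
        have h: "\<bar>EA f x - EB f x\<bar> \<ge> 1/2"
        proof (cases "x \<in> X")
          case True
          then have "x \<notin> Y" using \<open>x \<in> S\<close> unfolding S_def by auto
          then have "EB f x < 1/2" using xs unfolding Y_def by auto
          moreover have "EA f x = 1" using elim True unfolding f_def by simp
          ultimately show ?thesis by simp
        next
          case False
          then have "x \<in> Y" using \<open>x \<in> S\<close> unfolding S_def by auto
          then have "EB f x \<ge> 1/2" unfolding Y_def by auto
          moreover have "EA f x = 0" using elim False unfolding f_def by simp
          ultimately show ?thesis by simp
        qed
        have "1 \<le> (2 * \<bar>EA f x - EB f x\<bar>) powr r" using h r by (intro ge_one_powr_ge_zero) auto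
        also have "\<dots> = 2 powr r * \<bar>EA f x - EB f x\<bar> powr r" by (simp add: powr_mult)
        finally have "ennreal 1 \<le> ennreal (2 powr r * \<bar>EA f x - EB f x\<bar> powr r)" by (rule ennreal_leI)
        then show ?thesis using True by (simp add: ennreal_mult)
      qed
    qed
  qed
  also have "\<dots> = ennreal (2 powr r) * (\<integral>\<^sup>+x. ennreal (\<bar>EA f x - EB f x\<bar> powr r) \<partial>M)"
    by (rule nn_integral_cmult) measurable
  finally show ?thesis using YB unfolding S_def EA_def EB_def f_def cond_exp_def by blast
qed

lemma ind_lp:
  assumes XM: "X \<in> sets M" and p: "p \<ge> 1"
  shows "lp_norm M p (indicator X) \<le> 1"
proof (cases "p = \<infinity>")
  case True
  have "esssup M (\<lambda>x. ennreal \<bar>indicator X x :: real\<bar>) \<le> 1"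
    by (rule esssup_I) (use XM in \<open>auto simp: indicator_def\<close>)
  then show ?thesis using True by (simp add: lp_norm_def)
next
  case False
  define P where "P = enn2real p"
  have pP: "p = ennreal P" unfolding P_def using False by (simp add: less_top)
  have P1: "P \<ge> 1" using p unfolding pP by simp
  define I where "I = (\<integral>\<^sup>+x. ennreal (\<bar>indicator X x :: real\<bar> powr P) \<partial>M)"
  have "I \<le> (\<integral>\<^sup>+x. 1 \<partial>M)" unfolding I_def
    by (intro nn_integral_mono) (auto simp: indicator_def)
  also have "\<dots> = 1" using emeasure_space_1 by simp
  finally have I1: "I \<le> 1" .
  then have It: "I \<noteq> \<infinity>" by (auto simp: top_unique)
  have "enn2real I \<le> 1" using I1 It by (simp add: enn2real_leI)
  then have "enn2real I powr (1 / P) \<le> 1" using P1 by (intro powr_le1) auto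
  then show ?thesis using False It unfolding lp_norm_def Let_def P_def[symmetric] I_def[symmetric]
    by (simp add: ennreal_le_1)
qed

lemma opnorm_sym: "cond_exp_diff_opnorm M p q A B = cond_exp_diff_opnorm M p q B A"
proof -
  have "lp_norm M q (\<lambda>x. cond_exp M A f x - cond_exp M B f x) = lp_norm M q (\<lambda>x. cond_exp M B f x - cond_exp M A f x)" for f
    unfolding lp_norm_def by (simp add: abs_minus_commute)
  then show ?thesis unfolding cond_exp_diff_opnorm_def by simp
qed

lemma rho_bound:
  assumes A: "sigma_subfield M A" and B: "sigma_subfield M B" and q1: "1 \<le> q" and qp: "q < p"
    and e: "\<epsilon> > 0" and op: "cond_exp_diff_opnorm M p q A B \<le> ennreal \<epsilon>"
  shows "rho M A B \<le> ennreal (2 powr enn2real q * \<epsilon> powr enn2real q)"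
proof -
  have qtop: "q < top" using qp top.not_eq_extremum by fastforce
  define r where "r = enn2real q"
  have qr: "q = ennreal r" unfolding r_def using qtop by simp
  have r1: "r \<ge> 1" using q1 unfolding qr by simp
  have r0: "r > 0" using r1 by simp
  have p1: "p \<ge> 1" using q1 qp by simp
  show ?thesis unfolding rho_def r_def[symmetric]
  proof (rule SUP_least)
    fix X assume X: "X \<in> A"
    have XM: "X \<in> sets M" using X sf_sub[OF A] by auto
    obtain Y where Y: "Y \<in> B" and YX: "emeasure M ((X - Y) \<union> (Y - X)) \<le> ennreal (2 powr r) *
       (\<integral>\<^sup>+x. ennreal (\<bar>cond_exp M A (indicator X) x - cond_exp M B (indicator X) x\<bar> powr r) \<partial>M)"
      using markov_set[OF A B X r0] by blast
    have im: "(indicator X :: 'a \<Rightarrow> real) \<in> borel_measurable M" using XM by simp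
    have "lp_norm M q (\<lambda>x. cond_exp M A (indicator X) x - cond_exp M B (indicator X) x) \<le> cond_exp_diff_opnorm M p q A B"
      unfolding cond_exp_diff_opnorm_def using im ind_lp[OF XM p1] by (intro SUP_upper) auto
    also have "\<dots> \<le> ennreal \<epsilon>" by (rule op)
    finally have "lp_norm M (ennreal r) (\<lambda>x. cond_exp M A (indicator X) x - cond_exp M B (indicator X) x) \<le> ennreal \<epsilon>"
      unfolding qr .
    from lq_to_nn[OF r0 e this]
    have "ennreal (2 powr r) * (\<integral>\<^sup>+x. ennreal (\<bar>cond_exp M A (indicator X) x - cond_exp M B (indicator X) x\<bar> powr r) \<partial>M)
        \<le> ennreal (2 powr r) * ennreal (\<epsilon> powr r)" by (rule mult_left_mono) simp
    also have "\<dots> = ennreal (2 powr r * \<epsilon> powr r)" by (simp add: ennreal_mult)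
    finally have "emeasure M ((X - Y) \<union> (Y - X)) \<le> ennreal (2 powr r * \<epsilon> powr r)" using YX by (rule order.trans[rotated])
    then show "(INF Y\<in>B. emeasure M ((X - Y) \<union> (Y - X))) \<le> ennreal (2 powr r * \<epsilon> powr r)"
      using Y by (intro INF_lower2) auto
  qed
qed

end

lemma tend0I:
  fixes f :: "nat \<Rightarrow> ennreal"
  assumes "\<And>e. e > 0 \<Longrightarrow> eventually (\<lambda>n. f n \<le> ennreal e) sequentially"
  shows "f \<longlonglongrightarrow> 0"
proof (rule order_tendstoI)
  fix a :: ennreal assume "a < 0" then show "eventually (\<lambda>n. a < f n) sequentially" by simp
next
  fix u :: ennreal assume u: "0 < u"
  obtain z where z: "0 < z" "z < u" using dense[OF u] by blast
  have zt: "z < top" using z(2) top.not_eq_extremum by fastforce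
  define e where "e = enn2real z"
  have ez: "ennreal e = z" unfolding e_def using zt by simp
  have e0: "e > 0" using z(1) zt unfolding e_def by (simp add: enn2real_positive_iff)
  show "eventually (\<lambda>n. f n < u) sequentially"
    using assms[OF e0] by eventually_elim (use ez z in auto)
qed

lemma tend0D:
  fixes f :: "nat \<Rightarrow> ennreal"
  assumes "f \<longlonglongrightarrow> 0" "e > 0"
  shows "eventually (\<lambda>n. f n < ennreal e) sequentially"
  using order_tendstoD(2)[OF assms(1)] assms(2) by simp

lemma rho_lt:
  assumes "rho M A B < ennreal \<delta>"
  shows "\<forall>X\<in>A. \<exists>Y\<in>B. emeasure M ((X - Y) \<union> (Y - X)) < ennreal \<delta>"
proof
  fix X assume X: "X \<in> A"
  have "(INF Y\<in>B. emeasure M ((X - Y) \<union> (Y - X))) \<le> rho M A B"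
    unfolding rho_def using X by (rule SUP_upper)
  then have "(INF Y\<in>B. emeasure M ((X - Y) \<union> (Y - X))) < ennreal \<delta>" using assms by simp
  then show "\<exists>Y\<in>B. emeasure M ((X - Y) \<union> (Y - X)) < ennreal \<delta>" by (simp add: INF_less_iff)
qed

theorem mainTheorem8:
  fixes M :: "'a measure" and p q :: ennreal and B :: "nat \<Rightarrow> 'a set set"
  assumes "prob_space M"
    and "1 \<le> q" and "q < p"
    and "\<And>n. sigma_subfield M (B n)"
  shows "(((\<lambda>n. hausdorff_D M (B n) (B 0)) \<longlonglongrightarrow> 0)
            \<longrightarrow> ((\<lambda>n. cond_exp_diff_opnorm M p q (B n) (B 0)) \<longlonglongrightarrow> 0))
         \<and> (((\<lambda>n. cond_exp_diff_opnorm M p q (B n) (B 0)) \<longlonglongrightarrow> 0)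
            \<longleftrightarrow> ((\<lambda>n. hausdorff_D M (B n) (B 0)) \<longlonglongrightarrow> 0))"
proof -
  interpret prob_space M by (rule assms(1))
  have q1: "1 \<le> q" and qp: "q < p" by (rule assms(2), rule assms(3))
  have sB: "sigma_subfield M (B n)" for n by (rule assms(4))
  have D1: "(\<lambda>n. cond_exp_diff_opnorm M p q (B n) (B 0)) \<longlonglongrightarrow> 0"
    if D: "(\<lambda>n. hausdorff_D M (B n) (B 0)) \<longlonglongrightarrow> 0"
  proof (rule tend0I)
    fix \<epsilon> :: real assume e: "\<epsilon> > 0"
    obtain \<delta> where d0: "\<delta> > 0" and H: "\<forall>A B. sigma_subfield M A \<longrightarrow> sigma_subfield M B
      \<longrightarrow> (\<forall>X\<in>A. \<exists>Y\<in>B. emeasure M ((X - Y) \<union> (Y - X)) < ennreal \<delta>)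
      \<longrightarrow> (\<forall>X\<in>B. \<exists>Y\<in>A. emeasure M ((X - Y) \<union> (Y - X)) < ennreal \<delta>)
      \<longrightarrow> cond_exp_diff_opnorm M p q A B \<le> ennreal \<epsilon>"
      using dir1[OF q1 qp e] by blast
    show "eventually (\<lambda>n. cond_exp_diff_opnorm M p q (B n) (B 0) \<le> ennreal \<epsilon>) sequentially"
      using tend0D[OF D d0]
    proof eventually_elim
      case (elim n)
      have "rho M (B n) (B 0) < ennreal \<delta>" using elim unfolding hausdorff_D_def
        by (rule le_less_trans[rotated]) simp
      moreover have "rho M (B 0) (B n) < ennreal \<delta>" using elim unfolding hausdorff_D_def
        by (rule le_less_trans[rotated]) simp
      ultimately show ?case using H sB rho_lt by blast
    qed
  qed
  have D2: "(\<lambda>n. hausdorff_D M (B n) (B 0)) \<longlonglongrightarrow> 0"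
    if O: "(\<lambda>n. cond_exp_diff_opnorm M p q (B n) (B 0)) \<longlonglongrightarrow> 0"
  proof (rule tend0I)
    fix e :: real assume e: "e > 0"
    define r where "r = enn2real q"
    have qtop: "q < top" using qp top.not_eq_extremum by fastforce
    have r1: "r \<ge> 1" using q1 qtop unfolding r_def by (metis ennreal_enn2real ennreal_ge_1)
    have r0: "r > 0" using r1 by simp
    define \<epsilon> where "\<epsilon> = (e / (2 * 2 powr r)) powr (1/r)"
    have e0: "\<epsilon> > 0" unfolding \<epsilon>_def using e by simp
    have ee: "\<epsilon> powr r = e / (2 * 2 powr r)" unfolding \<epsilon>_def using e r0 by (simp add: powr_powr)
    have sum: "2 powr r * \<epsilon> powr r + 2 powr r * \<epsilon> powr r = e" unfolding ee by simp
    show "eventually (\<lambda>n. hausdorff_D M (B n) (B 0) \<le> ennreal e) sequentially"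
      using tend0D[OF O e0]
    proof eventually_elim
      case (elim n)
      have a: "rho M (B n) (B 0) \<le> ennreal (2 powr r * \<epsilon> powr r)"
        unfolding r_def by (rule rho_bound[OF sB sB q1 qp e0]) (use elim in simp)
      have b: "rho M (B 0) (B n) \<le> ennreal (2 powr r * \<epsilon> powr r)"
        unfolding r_def by (rule rho_bound[OF sB sB q1 qp e0]) (use elim opnorm_sym in simp)
      have "hausdorff_D M (B n) (B 0) \<le> ennreal (2 powr r * \<epsilon> powr r) + ennreal (2 powr r * \<epsilon> powr r)"
        unfolding hausdorff_D_def using a b by (rule add_mono)
      also have "\<dots> = ennreal e" using e0 by (simp add: ennreal_plus[symmetric] sum del: ennreal_plus)
      finally show ?case .
    qed
  qed
  show ?thesis using D1 D2 by blast
qed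


end
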